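(* Let $v\in\Sigma^*$, let $u$ be a $v$-minimal word, let $i\in\mathrm{supp}(u)$ and $g\in\mathcal{I}_i$. If a word $w$ $u$-represents $g$, then either $g=\theta_i(w)=0_i$ or $\mathrm{supp}(w)=\mathrm{supp}(u)$.
   Context: Let $\mathcal{A}=\langle Q,\Sigma,\delta\rangle$ be a synchronizing automaton with $n$ states $q_1,\dots,q_n$; write $q\cdot u$ for the action of $u\in\Sigma^*$ and $\mathrm{rk}(u)=|Q\cdot u|$. Each word acts linearly on $\mathbb{C}Q$ by $q\mapsto q\cdot u$, preserving $w^\perp=\{x:\langle x,q_1+\dots+q_n\rangle=0\}$; let $\rho:\Sigma^*\to\mathbb{M}_{n-1}(\mathbb{C})$ be the induced representation, $\mathcal{R}$ the $\mathbb{C}$-algebra generated by $\rho(\Sigma^* )$, $\mathrm{Rad}(\mathcal{A})=\rho^{-1}(\mathrm{Rad}(\mathcal{R}))$. Write $\mathcal{R}/\mathrm{Rad}(\mathcal{R})\cong\prod_{i=1}^k\mathbb{M}_{n_i}(\mathbb{C})$ and let $\theta_i:\Sigma^*\to\mathbb{M}_{n_i}(\mathbb{C})$ be $\rho$ followed by the quotient map and the $i$-th projection; $0_i$ is the zero matrix. The monoid $\theta_i(\Sigma^* )$ has a unique $0$-minimal ideal $\mathcal{I}_i$ (which contains $0_i$). The support of a word $z$ is $\mathrm{supp}(z)=\{i:\theta_i(z)\neq0_i\}$. For $v\in\Sigma^*$, a word $u\in\Sigma^*v\Sigma^*$ is $v$-minimal if $\mathrm{supp}(u)\neq\emptyset$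 and there is no $z\in\Sigma^*v\Sigma^*$ with $\emptyset\neq\mathrm{supp}(z)\subsetneq\mathrm{supp}(u)$. For such $u$, $i\in\mathrm{supp}(u)$ and $g\in\mathcal{I}_i$, a word $w$ $u$-represents $g$ if $w\in\Sigma^*u\Sigma^*$, $\theta_i(w)=g$, and either $g=0_i$ or $\mathrm{rk}(w)$ is minimum among all words $w'\in\Sigma^*u\Sigma^*$ with $\theta_i(w')=g$. *)

theory Defs
  imports "Jordan_Normal_Form.Matrix"
begin

(* States are 0,...,n-1 (q_1..q_n of the paper); the alphabet is a finite set Alph;
   words are lists; delta is the transition function. *)

definition act :: "(nat \<Rightarrow> 'a \<Rightarrow> nat) \<Rightarrow> nat \<Rightarrow> 'a list \<Rightarrow> nat" where
  "act \<delta> q u = foldl \<delta> q u"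

definition rk :: "nat \<Rightarrow> (nat \<Rightarrow> 'a \<Rightarrow> nat) \<Rightarrow> 'a list \<Rightarrow> nat" where
  "rk n \<delta> u = card ((\<lambda>q. act \<delta> q u) ` {..<n})"

definition automaton :: "nat \<Rightarrow> 'a set \<Rightarrow> (nat \<Rightarrow> 'a \<Rightarrow> nat) \<Rightarrow> bool" where
  "automaton n Alph \<delta> \<longleftrightarrow> n \<ge> 1 \<and> finite Alph \<and> (\<forall>q<n. \<forall>a\<in>Alph. \<delta> q a < n)"

definition synchronizing :: "nat \<Rightarrow> 'a set \<Rightarrow> (nat \<Rightarrow> 'a \<Rightarrow> nat) \<Rightarrow> bool" where
  "synchronizing n Alph \<delta> \<longleftrightarrow> (\<exists>w\<in>lists Alph. rk n \<delta> w = 1)"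

(* Matrix of the action of u on w^perp = {x. sum x = 0} w.r.t. the basis
   e_j = q_j - q_{n-1} (j < n-1), acting on row vectors (so rho(uv) = rho u * rho v):
   e_j . u = q_{j.u} - q_{(n-1).u}, whose r-th coordinate is
   [j.u = r] - [(n-1).u = r]. *)
definition rho :: "nat \<Rightarrow> (nat \<Rightarrow> 'a \<Rightarrow> nat) \<Rightarrow> 'a list \<Rightarrow> complex mat" where
  "rho n \<delta> u = mat (n - 1) (n - 1)
     (\<lambda>(j, r). (if act \<delta> j u = r then 1 else 0) - (if act \<delta> (n - 1) u = r then 1 else 0))"

inductive_set gen_alg :: "nat \<Rightarrow> complex mat set \<Rightarrow> complex mat set" for d S where
  gen: "A \<in> S \<Longrightarrow> A \<in> gen_alg d S"
| zero: "0\<^sub>m d d \<in> gen_alg d S"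
| add: "A \<in> gen_alg d S \<Longrightarrow> B \<in> gen_alg d S \<Longrightarrow> A + B \<in> gen_alg d S"
| mult: "A \<in> gen_alg d S \<Longrightarrow> B \<in> gen_alg d S \<Longrightarrow> A * B \<in> gen_alg d S"
| smult: "A \<in> gen_alg d S \<Longrightarrow> c \<cdot>\<^sub>m A \<in> gen_alg d S"

definition jac_rad :: "nat \<Rightarrow> complex mat set \<Rightarrow> complex mat set" where
  "jac_rad d R = {x \<in> R. \<forall>y\<in>R. \<exists>z\<in>R. z * (1\<^sub>m d - y * x) = 1\<^sub>m d}"

(* phi realises an algebra isomorphism R / Rad(R) \<cong> prod_{i<k} M_{ns i}(C):
   phi = (phi 0, ..., phi (k-1)) is a surjective unital algebra homomorphism
   R \<rightarrow> prod_i M_{ns i}(C) whose kernel is Rad(R). *)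
definition wedderburn_iso ::
  "nat \<Rightarrow> complex mat set \<Rightarrow> nat \<Rightarrow> (nat \<Rightarrow> nat) \<Rightarrow> (nat \<Rightarrow> complex mat \<Rightarrow> complex mat) \<Rightarrow> bool" where
  "wedderburn_iso d R k ns \<phi> \<longleftrightarrow>
     (\<forall>i<k. ns i \<ge> 1) \<and>
     (\<forall>i<k. \<forall>A\<in>R. \<phi> i A \<in> carrier_mat (ns i) (ns i)) \<and>
     (\<forall>i<k. \<forall>A\<in>R. \<forall>B\<in>R. \<phi> i (A + B) = \<phi> i A + \<phi> i B \<and> \<phi> i (A * B) = \<phi> i A * \<phi> i B) \<and>
     (\<forall>i<k. \<forall>c. \<forall>A\<in>R. \<phi> i (c \<cdot>\<^sub>m A) = c \<cdot>\<^sub>m \<phi> i A) \<and>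
     (\<forall>i<k. \<phi> i (1\<^sub>m d) = 1\<^sub>m (ns i)) \<and>
     (\<forall>A\<in>R. (\<forall>i<k. \<phi> i A = 0\<^sub>m (ns i) (ns i)) \<longleftrightarrow> A \<in> jac_rad d R) \<and>
     (\<forall>B. (\<forall>i<k. B i \<in> carrier_mat (ns i) (ns i)) \<longrightarrow> (\<exists>A\<in>R. \<forall>i<k. \<phi> i A = B i))"

definition theta :: "nat \<Rightarrow> (nat \<Rightarrow> 'a \<Rightarrow> nat) \<Rightarrow> (nat \<Rightarrow> complex mat \<Rightarrow> complex mat) \<Rightarrow> nat \<Rightarrow> 'a list \<Rightarrow> complex mat" where
  "theta n \<delta> \<phi> i u = \<phi> i (rho n \<delta> u)"

definition supp :: "nat \<Rightarrow> (nat \<Rightarrow> 'a \<Rightarrow> nat) \<Rightarrow> nat \<Rightarrow> (nat \<Rightarrow> nat) \<Rightarrow> (nat \<Rightarrow> complex mat \<Rightarrow> complex mat) \<Rightarrow> 'a list \<Rightarrow> nat set" where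
  "supp n \<delta> k ns \<phi> z = {i. i < k \<and> theta n \<delta> \<phi> i z \<noteq> 0\<^sub>m (ns i) (ns i)}"

definition factor_words :: "'a set \<Rightarrow> 'a list \<Rightarrow> 'a list set" where
  "factor_words Alph v = {x @ v @ y | x y. x \<in> lists Alph \<and> y \<in> lists Alph}"

definition v_minimal :: "nat \<Rightarrow> 'a set \<Rightarrow> (nat \<Rightarrow> 'a \<Rightarrow> nat) \<Rightarrow> nat \<Rightarrow> (nat \<Rightarrow> nat) \<Rightarrow> (nat \<Rightarrow> complex mat \<Rightarrow> complex mat) \<Rightarrow> 'a list \<Rightarrow> 'a list \<Rightarrow> bool" where
  "v_minimal n Alph \<delta> k ns \<phi> v u \<longleftrightarrow>
     u \<in> factor_words Alph v \<and> supp n \<delta> k ns \<phi> u \<noteq> {} \<and>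
     \<not> (\<exists>z\<in>factor_words Alph v. supp n \<delta> k ns \<phi> z \<noteq> {} \<and> supp n \<delta> k ns \<phi> z \<subset> supp n \<delta> k ns \<phi> u)"

definition mon_ideal :: "complex mat set \<Rightarrow> complex mat set \<Rightarrow> bool" where
  "mon_ideal M I \<longleftrightarrow> I \<subseteq> M \<and> I \<noteq> {} \<and> (\<forall>x\<in>M. \<forall>y\<in>I. \<forall>z\<in>M. x * y * z \<in> I)"

definition zero_minimal_ideal :: "complex mat set \<Rightarrow> complex mat \<Rightarrow> complex mat set \<Rightarrow> bool" where
  "zero_minimal_ideal M Z I \<longleftrightarrow> mon_ideal M I \<and> I \<noteq> {Z} \<and>
     (\<forall>J. mon_ideal M J \<and> J \<subseteq> I \<longrightarrow> J = {Z} \<or> J = I)"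

definition I_ideal :: "nat \<Rightarrow> 'a set \<Rightarrow> (nat \<Rightarrow> 'a \<Rightarrow> nat) \<Rightarrow> (nat \<Rightarrow> nat) \<Rightarrow> (nat \<Rightarrow> complex mat \<Rightarrow> complex mat) \<Rightarrow> nat \<Rightarrow> complex mat set" where
  "I_ideal n Alph \<delta> ns \<phi> i =
     (THE I. zero_minimal_ideal (theta n \<delta> \<phi> i ` lists Alph) (0\<^sub>m (ns i) (ns i)) I)"

definition u_represents :: "nat \<Rightarrow> 'a set \<Rightarrow> (nat \<Rightarrow> 'a \<Rightarrow> nat) \<Rightarrow> (nat \<Rightarrow> nat) \<Rightarrow> (nat \<Rightarrow> complex mat \<Rightarrow> complex mat) \<Rightarrow> nat \<Rightarrow> 'a list \<Rightarrow> 'a list \<Rightarrow> complex mat \<Rightarrow> bool" where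
  "u_represents n Alph \<delta> ns \<phi> i u w g \<longleftrightarrow>
     w \<in> factor_words Alph u \<and> theta n \<delta> \<phi> i w = g \<and>
     (g = 0\<^sub>m (ns i) (ns i) \<or>
      (\<forall>w'\<in>factor_words Alph u. theta n \<delta> \<phi> i w' = g \<longrightarrow> rk n \<delta> w \<le> rk n \<delta> w'))"

end

theory Submission
  imports Defs
begin

lemma act_lt:
  assumes "automaton n Alph \<delta>" "a \<in> lists Alph" "q < n"
  shows "act \<delta> q a < n"
  using assms(2,3)
proof (induction a arbitrary: q rule: rev_induct)
  case Nil then show ?case by (simp add: act_def)
next
  case (snoc x xs)
  then show ?case using assms(1) by (simp add: act_def automaton_def)
qed

lemma act_append: "act \<delta> q (a @ b) = act \<delta> (act \<delta> q a) b"
  by (simp add: act_def)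

lemma sum_ind:
  fixes F :: "nat \<Rightarrow> complex"
  assumes "x < n"
  shows "(\<Sum>s<n. (if x = s then 1 else 0) * F s) = F x"
proof -
  have "(\<Sum>s<n. (if x = s then 1 else 0) * F s) = (\<Sum>s<n. if x = s then F s else 0)"
    by (rule sum.cong) auto
  also have "\<dots> = F x" using assms by (simp add: sum.delta)
  finally show ?thesis .
qed

lemma rho_mult:
  assumes A: "automaton n Alph \<delta>" and a: "a \<in> lists Alph" and b: "b \<in> lists Alph"
  shows "rho n \<delta> (a @ b) = rho n \<delta> a * rho n \<delta> b"
proof (rule eq_matI)
  fix j r assume j: "j < dim_row (rho n \<delta> a * rho n \<delta> b)" and r: "r < dim_col (rho n \<delta> a * rho n \<delta> b)"
  have n1: "n \<ge> 1" using A by (simp add: automaton_def)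
  have jn: "j < n - 1" and rn: "r < n - 1" using j r by (auto simp: rho_def)
  define m where "m = n - 1"
  define F where "F s = (if act \<delta> s b = r then 1 else 0) - (if act \<delta> m b = r then (1::complex) else 0)" for s
  define G where "G x = (\<Sum>s<n. (if x = s then 1 else 0) * F s)" for x
  have Fm: "F m = 0" by (simp add: F_def)
  have prod: "(rho n \<delta> a * rho n \<delta> b) $$ (j, r) =
     (\<Sum>s<n - 1. ((if act \<delta> j a = s then 1 else 0) - (if act \<delta> m a = s then 1 else 0)) * F s)"
    using jn rn by (simp add: rho_def scalar_prod_def F_def m_def lessThan_atLeast0 cong: if_cong)
  have nm: "{..<n} = insert m {..<n - 1}" using n1 by (auto simp: m_def)
  have "(\<Sum>s<n - 1. ((if act \<delta> j a = s then 1 else 0) - (if act \<delta> m a = s then 1 else 0)) * F s)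
      = (\<Sum>s<n. ((if act \<delta> j a = s then 1 else 0) - (if act \<delta> m a = s then 1 else 0)) * F s)"
    using Fm by (simp add: nm m_def)
  also have "\<dots> = G (act \<delta> j a) - G (act \<delta> m a)"
    by (simp add: G_def left_diff_distrib sum_subtractf)
  also have "\<dots> = F (act \<delta> j a) - F (act \<delta> m a)"
    using act_lt[OF A a, of j] act_lt[OF A a, of m] jn n1
    by (simp add: G_def sum_ind m_def)
  also have "\<dots> = rho n \<delta> (a @ b) $$ (j, r)"
    using jn rn by (simp add: rho_def F_def act_append m_def)
  finally show "rho n \<delta> (a @ b) $$ (j, r) = (rho n \<delta> a * rho n \<delta> b) $$ (j, r)"
    using prod by simp
qed (auto simp: rho_def)

theorem mainTheorem4:
  fixes n :: nat and Alph :: "'a set" and \<delta> :: "nat \<Rightarrow> 'a \<Rightarrow> nat"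
    and k :: nat and ns :: "nat \<Rightarrow> nat" and \<phi> :: "nat \<Rightarrow> complex mat \<Rightarrow> complex mat"
    and v u w :: "'a list" and i :: nat and g :: "complex mat"
  assumes "automaton n Alph \<delta>"
    and "synchronizing n Alph \<delta>"
    and "wedderburn_iso (n - 1) (gen_alg (n - 1) (rho n \<delta> ` lists Alph)) k ns \<phi>"
    and "v \<in> lists Alph"
    and "v_minimal n Alph \<delta> k ns \<phi> v u"
    and "i \<in> supp n \<delta> k ns \<phi> u"
    and "g \<in> I_ideal n Alph \<delta> ns \<phi> i"
    and "u_represents n Alph \<delta> ns \<phi> i u w g"
  shows "(g = theta n \<delta> \<phi> i w \<and> theta n \<delta> \<phi> i w = 0\<^sub>m (ns i) (ns i))
         \<or> supp n \<delta> k ns \<phi> w = supp n \<delta> k ns \<phi> u"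
proof (cases "g = 0\<^sub>m (ns i) (ns i)")
  case True
  then show ?thesis using assms(8) by (simp add: u_represents_def)
next
  case False
  define R where "R = gen_alg (n - 1) (rho n \<delta> ` lists Alph)"
  have W: "wedderburn_iso (n - 1) R k ns \<phi>" using assms(3) R_def by simp
  obtain x y where u: "u = x @ v @ y" "x \<in> lists Alph" "y \<in> lists Alph"
    using assms(5) by (auto simp: v_minimal_def factor_words_def)
  obtain a b where w: "w = a @ u @ b" "a \<in> lists Alph" "b \<in> lists Alph"
    using assms(8) by (auto simp: u_represents_def factor_words_def)
  have ul: "u \<in> lists Alph" using u assms(4) by simp
  have wv: "w \<in> factor_words Alph v"
    unfolding factor_words_def using u w by (intro CollectI exI[of _ "a @ x"] exI[of _ "y @ b"]) auto
  have inR: "rho n \<delta> z \<in> R" if "z \<in> lists Alph" for z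
    using that R_def by (auto intro: gen_alg.gen)
  have rw: "rho n \<delta> w = rho n \<delta> a * rho n \<delta> u * rho n \<delta> b"
  proof -
    have c: "\<And>z. rho n \<delta> z \<in> carrier_mat (n - 1) (n - 1)" by (simp add: rho_def)
    have "rho n \<delta> w = rho n \<delta> a * (rho n \<delta> u * rho n \<delta> b)"
      using w ul rho_mult[OF assms(1)] by simp
    also have "\<dots> = rho n \<delta> a * rho n \<delta> u * rho n \<delta> b"
      using assoc_mult_mat[OF c c c] by simp
    finally show ?thesis .
  qed
  have sub: "supp n \<delta> k ns \<phi> w \<subseteq> supp n \<delta> k ns \<phi> u"
  proof
    fix j assume j: "j \<in> supp n \<delta> k ns \<phi> w"
    hence jk: "j < k" by (simp add: supp_def)
    have mul: "\<And>A B. A \<in> R \<Longrightarrow> B \<in> R \<Longrightarrow> \<phi> j (A * B) = \<phi> j A * \<phi> j B"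
      using W jk unfolding wedderburn_iso_def by blast
    have car: "\<And>A. A \<in> R \<Longrightarrow> \<phi> j A \<in> carrier_mat (ns j) (ns j)"
      using W jk unfolding wedderburn_iso_def by blast
    have abR: "rho n \<delta> a * rho n \<delta> u \<in> R"
      unfolding R_def by (rule gen_alg.mult) (use inR w ul in \<open>auto simp: R_def\<close>)
    have th: "theta n \<delta> \<phi> j w = \<phi> j (rho n \<delta> a) * \<phi> j (rho n \<delta> u) * \<phi> j (rho n \<delta> b)"
      unfolding theta_def rw using mul abR inR w ul by simp
    show "j \<in> supp n \<delta> k ns \<phi> u"
    proof (rule ccontr)
      assume "j \<notin> supp n \<delta> k ns \<phi> u"
      hence "\<phi> j (rho n \<delta> u) = 0\<^sub>m (ns j) (ns j)" using jk by (simp add: supp_def theta_def)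
      hence "theta n \<delta> \<phi> j w = 0\<^sub>m (ns j) (ns j)"
      proof -
        have ca: "\<phi> j (rho n \<delta> a) \<in> carrier_mat (ns j) (ns j)" using car inR w by blast
        have cb: "\<phi> j (rho n \<delta> b) \<in> carrier_mat (ns j) (ns j)" using car inR w by blast
        have "\<phi> j (rho n \<delta> a) * 0\<^sub>m (ns j) (ns j) = 0\<^sub>m (ns j) (ns j)"
          using right_mult_zero_mat[OF ca] by simp
        moreover have "0\<^sub>m (ns j) (ns j) * \<phi> j (rho n \<delta> b) = 0\<^sub>m (ns j) (ns j)"
          using left_mult_zero_mat[OF cb] by simp
        ultimately show ?thesis using th \<open>\<phi> j (rho n \<delta> u) = 0\<^sub>m (ns j) (ns j)\<close> by simp
      qed
      thus False using j by (simp add: supp_def)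
    qed
  qed
  have "i \<in> supp n \<delta> k ns \<phi> w"
    using assms(6,8) False by (simp add: supp_def u_represents_def)
  hence "supp n \<delta> k ns \<phi> w \<noteq> {}" by auto
  with wv sub assms(5) show ?thesis unfolding v_minimal_def by blast
qed

end
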